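(* Let $\mathsf{X}=\mathsf{X}^{(1)}+\mathsf{X}^{(2)}$ be a real time series of length $N$, let $L$ be a window length with $1<L<N$ and $K=N-L+1$. Suppose the $L$-rank of $\mathsf{X}$ equals $r$, the $L$-rank of $\mathsf{X}^{(m)}$ equals $r_m$ for $m=1,2$, and $r_1+r_2=r$. Then there exist symmetric positive semidefinite matrices $\mathbf{L}\in\mathbb{R}^{L\times L}$ and $\mathbf{R}\in\mathbb{R}^{K\times K}$, both of rank $r$ and consistent with each of $\mathbf{X}$, $\mathbf{X}^{(1)}$, $\mathbf{X}^{(2)}$, such that $\mathsf{X}^{(1)}$ and $\mathsf{X}^{(2)}$ are strongly $(\mathbf{L},\mathbf{R})$-separable.
   Context: For a series $\mathsf{Y}=(y_1,\dots,y_N)$ and window length $L$ ($1<L<N$, $K=N-L+1$), the $L$-trajectory matrix $\mathbf{Y}=\mathcal{T}(\mathsf{Y})\in\mathbb{R}^{L\times K}$ has $(i,j)$ entry $y_{i+j-1}$; its rank is the $L$-rank of $\mathsf{Y}$. Bold $\mathbf{X},\mathbf{X}^{(1)},\mathbf{X}^{(2)}$ denote the $L$-trajectory matrices of $\mathsf{X},\mathsf{X}^{(1)},\mathsf{X}^{(2)}$. A pair of symmetric positive semidefinite matrices $(\mathbf{L},\mathbf{R})$, $\mathbf{L}\in\mathbb{R}^{L\times L}$, $\mathbf{R}\in\mathbb{R}^{K\times K}$, is consistent with a matrix $\mathbf{Y}\in\mathbb{R}^{L\times K}$ if the column space of $\mathbf{L}$ contains the column space of $\mathbf{Y}$ and the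 column space of $\mathbf{R}$ contains the row space of $\mathbf{Y}$. For $\mathbf{Y}$ of rank $r$ and $(\mathbf{L},\mathbf{R})$ consistent with $\mathbf{Y}$, an $(\mathbf{L},\mathbf{R})$-SVD of $\mathbf{Y}$ is a decomposition $\mathbf{Y}=\sum_{i=1}^r\sigma_iP_iQ_i^{\mathrm{T}}$ with $\sigma_1\ge\dots\ge\sigma_r>0$, $P_i\in\mathbb{R}^L$, $Q_i\in\mathbb{R}^K$, $P_i^{\mathrm T}\mathbf{L}P_j=\delta_{ij}$ and $Q_i^{\mathrm T}\mathbf{R}Q_j=\delta_{ij}$. Two series $\mathsf{X}^{(1)},\mathsf{X}^{(2)}$ of length $N$ are weakly $(\mathbf{L},\mathbf{R})$-separable if $(\mathbf{X}^{(1)})^{\mathrm T}\mathbf{L}\mathbf{X}^{(2)}=\mathbf{0}_{K,K}$ and $\mathbf{X}^{(1)}\mathbf{R}(\mathbf{X}^{(2)})^{\mathrm T}=\mathbf{0}_{L,L}$; they are strongly $(\mathbf{L},\mathbf{R})$-separable if they are weakly $(\mathbf{L},\mathbf{R})$-separable and, writing $\mathbf{X}^{(m)}=\sum_{i=1}^{r_m}\sigma_{m,i}P_{m,i}Q_{m,i}^{\mathrm T}$ for $(\mathbf{L},\mathbf{R})$-SVDs, $\sigma_{1,i}\ne\sigma_{2,j}$ for all $i,j$. *)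

theory Defs
  imports "Jordan_Normal_Form.DL_Rank"
begin

(* A series of length N is a real list of length N (0-based indices).
   L-trajectory matrix: L x K with K = N - L + 1, entry (i,j) = y_(i+j) (0-based). *)
definition traj :: "nat \<Rightarrow> real list \<Rightarrow> real mat" where
  "traj L ys = mat L (length ys - L + 1) (\<lambda>(i,j). ys ! (i + j))"

definition L_rank :: "nat \<Rightarrow> real list \<Rightarrow> nat" where
  "L_rank L ys = vec_space.rank L (traj L ys)"

definition col_space :: "real mat \<Rightarrow> real vec set" where
  "col_space A = {A *\<^sub>v v | v. v \<in> carrier_vec (dim_col A)}"

definition row_space :: "real mat \<Rightarrow> real vec set" where
  "row_space A = col_space (transpose_mat A)"

definition sym_psd :: "nat \<Rightarrow> real mat \<Rightarrow> bool" where
  "sym_psd n A \<longleftrightarrow> A \<in> carrier_mat n n \<and> transpose_mat A = A \<and>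
     (\<forall>v \<in> carrier_vec n. 0 \<le> v \<bullet> (A *\<^sub>v v))"

definition consistent :: "real mat \<Rightarrow> real mat \<Rightarrow> real mat \<Rightarrow> bool" where
  "consistent Lm Rm Y \<longleftrightarrow> col_space Y \<subseteq> col_space Lm \<and> row_space Y \<subseteq> col_space Rm"

definition LR_svd :: "real mat \<Rightarrow> real mat \<Rightarrow> real mat \<Rightarrow> (nat \<Rightarrow> real) \<Rightarrow> (nat \<Rightarrow> real vec)
    \<Rightarrow> (nat \<Rightarrow> real vec) \<Rightarrow> bool" where
  "LR_svd Lm Rm Y \<sigma> P Q \<longleftrightarrow>
    (let r = vec_space.rank (dim_row Y) Y in
     (\<forall>i j. i \<le> j \<and> j < r \<longrightarrow> \<sigma> j \<le> \<sigma> i) \<and>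
     (\<forall>i < r. 0 < \<sigma> i) \<and>
     (\<forall>i < r. P i \<in> carrier_vec (dim_row Y) \<and> Q i \<in> carrier_vec (dim_col Y)) \<and>
     (\<forall>i < r. \<forall>j < r. P i \<bullet> (Lm *\<^sub>v P j) = (if i = j then 1 else 0)) \<and>
     (\<forall>i < r. \<forall>j < r. Q i \<bullet> (Rm *\<^sub>v Q j) = (if i = j then 1 else 0)) \<and>
     (\<forall>a < dim_row Y. \<forall>b < dim_col Y. Y $$ (a, b) = (\<Sum>i<r. \<sigma> i * (P i $ a) * (Q i $ b))))"

definition weakly_sep :: "real mat \<Rightarrow> real mat \<Rightarrow> real mat \<Rightarrow> real mat \<Rightarrow> bool" where
  "weakly_sep Lm Rm X1 X2 \<longleftrightarrow>
     transpose_mat X1 * Lm * X2 = 0\<^sub>m (dim_col X1) (dim_col X1) \<and>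
     X1 * Rm * transpose_mat X2 = 0\<^sub>m (dim_row X1) (dim_row X1)"

definition strongly_sep :: "real mat \<Rightarrow> real mat \<Rightarrow> real mat \<Rightarrow> real mat \<Rightarrow> bool" where
  "strongly_sep Lm Rm X1 X2 \<longleftrightarrow> weakly_sep Lm Rm X1 X2 \<and>
     (\<exists>\<sigma> P Q. LR_svd Lm Rm X1 \<sigma> P Q) \<and> (\<exists>\<sigma> P Q. LR_svd Lm Rm X2 \<sigma> P Q) \<and>
     (\<forall>\<sigma>1 P1 Q1 \<sigma>2 P2 Q2. LR_svd Lm Rm X1 \<sigma>1 P1 Q1 \<and> LR_svd Lm Rm X2 \<sigma>2 P2 Q2 \<longrightarrow>
        (\<forall>i < vec_space.rank (dim_row X1) X1. \<forall>j < vec_space.rank (dim_row X2) X2. \<sigma>1 i \<noteq> \<sigma>2 j))"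

end

theory Submission
  imports Defs
begin


context vec_space begin

lemma rank_le_of_span_subset:
  assumes A: "A \<in> carrier_mat n na" and B: "B \<in> carrier_mat n nb"
    and sub: "span (set (cols A)) \<subseteq> span (set (cols B))"
  shows "rank A \<le> rank B"
proof -
  have sW: "subspace class_ring (span (set (cols B))) V"
    using B cols_dim carrier_matD(1) span_is_subspace by (metis module_vec_simps(3))
  have sX: "subspace class_ring (span (set (cols A))) V"
    using A cols_dim carrier_matD(1) span_is_subspace by (metis module_vec_simps(3))
  have ss: "subspace class_ring (span (set (cols A))) (vs (span (set (cols B))))"
    using nested_subspaces[OF sW sX sub] .
  show ?thesis unfolding rank_def
    using vectorspace.subspace_dim[OF subspace_is_vs[OF sW] ss fin_dim_span_cols[OF B]]
      fin_dim_span_cols[OF A] by auto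
qed

lemma rank_mult_le_left:
  assumes M: "M \<in> carrier_mat n m" and N: "N \<in> carrier_mat m k"
  shows "rank (M * N) \<le> rank M"
proof (rule rank_le_of_span_subset[OF _ M])
  show "M * N \<in> carrier_mat n k" using M N by auto
  show "span (set (cols (M * N))) \<subseteq> span (set (cols M))"
  proof
    fix x assume "x \<in> span (set (cols (M * N)))"
    then have "x \<in> vec_space.col_space n (M * N)" unfolding vec_space.col_space_def[of n] .
    then obtain y where y: "y \<in> carrier_vec k" "x = (M * N) *\<^sub>v y"
      using col_space_eq[of "M*N" k] M N by auto
    have "x = M *\<^sub>v (N *\<^sub>v y)" using y M N by auto
    moreover have "N *\<^sub>v y \<in> carrier_vec m" using N y by auto
    ultimately have "x \<in> vec_space.col_space n M"
      using col_space_eq[OF M] M by auto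
    then show "x \<in> span (set (cols M))" unfolding vec_space.col_space_def[of n] .
  qed
qed

lemma exists_maximal_cols:
  assumes A: "A \<in> carrier_mat n m"
  obtains S where "maximal S (\<lambda>T. T \<subseteq> set (cols A) \<and> lin_indpt T)" "rank A = card S"
proof -
  obtain S where "maximal S (\<lambda>T. T \<subseteq> set (cols A) \<and> lin_indpt T)"
    using maximal_exists[of "(\<lambda>T. T \<subseteq> set (cols A) \<and> lin_indpt T)" "card (set (cols A))" "{}"]
    by (meson List.finite_set card_mono empty_iff empty_subsetI finite_lin_indpt2 rev_finite_subset)
  moreover then have "rank A = card S" using rank_card_indpt[OF A] by blast
  ultimately show ?thesis using that by blast
qed

lemma rank_zero_col:
  assumes A: "A \<in> carrier_mat n m" and k: "k < m" and z: "col A k = 0\<^sub>v n"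
  shows "rank A < m"
proof -
  obtain S where max: "maximal S (\<lambda>T. T \<subseteq> set (cols A) \<and> lin_indpt T)" and rk: "rank A = card S"
    using exists_maximal_cols[OF A] by blast
  have SA: "S \<subseteq> set (cols A)" and li: "lin_indpt S" using max unfolding maximal_def by auto
  have Sc: "S \<subseteq> carrier_vec n" using SA A cols_dim by fastforce
  have "0\<^sub>v n \<notin> S" 
    by (rule zero_nin_lin_indpt[OF Sc li]) (auto simp: class_ring_simps, metis UNIV_I singletonD zero_neq_one)
  then have S2: "S \<subseteq> set (cols A) - {0\<^sub>v n}" using SA by auto
  have zin: "0\<^sub>v n \<in> set (cols A)" using z k A by (metis cols_length cols_nth carrier_matD(2) nth_mem)
  have "card S \<le> card (set (cols A) - {0\<^sub>v n})" using S2 by (simp add: card_mono)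
  also have "\<dots> = card (set (cols A)) - 1" using zin by simp
  also have "\<dots> < m"
  proof -
    have "card (set (cols A)) \<le> m" using A by (metis card_length cols_length carrier_matD(2))
    moreover have "card (set (cols A)) > 0" using zin by (auto simp: card_gt_0_iff)
    ultimately show ?thesis by linarith
  qed
  finally show ?thesis using rk by simp
qed

lemma rank_factor:
  assumes A: "A \<in> carrier_mat n m"
  obtains U C where "U \<in> carrier_mat n (rank A)" "C \<in> carrier_mat (rank A) m" "A = U * C"
proof -
  obtain S where max: "maximal S (\<lambda>T. T \<subseteq> set (cols A) \<and> lin_indpt T)" and rk: "rank A = card S"
    using exists_maximal_cols[OF A] by blast
  have SA: "S \<subseteq> set (cols A)" and li: "lin_indpt S" using max unfolding maximal_def by auto
  have Sc: "S \<subseteq> carrier_vec n" using SA A cols_dim by fastforce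
  have fS: "finite S" using SA finite_subset by blast
  obtain xs where xs: "set xs = S" "distinct xs" using finite_distinct_list[OF fS] by blast
  have lxs: "length xs = rank A" using xs rk distinct_card by metis
  define U where "U = mat_of_cols n xs"
  have U: "U \<in> carrier_mat n (rank A)" unfolding U_def using lxs by auto
  have colsU: "cols U = xs" unfolding U_def using xs Sc by (intro cols_mat_of_cols) auto
  have inspan: "col A j \<in> span S" if j: "j < m" for j
  proof (cases "col A j \<in> S")
    case True then show ?thesis using Sc in_own_span by blast
  next
    case False
    have cA: "col A j \<in> set (cols A)" using j A by (metis cols_length cols_nth carrier_matD(2) nth_mem)
    have "\<not> lin_indpt (S \<union> {col A j})"
    proof
      assume "lin_indpt (S \<union> {col A j})"
      then have "S \<union> {col A j} = S" using max cA SA unfolding maximal_def by blast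
      then show False using False by auto
    qed
    moreover have "col A j \<in> carrier V" using j A by auto
    ultimately show ?thesis using lin_dep_iff_in_span[OF _ li _ False] Sc by auto
  qed
  have "\<forall>j<m. \<exists>w. w \<in> carrier_vec (rank A) \<and> col A j = U *\<^sub>v w"
  proof (intro allI impI)
    fix j assume j: "j < m"
    have "col A j \<in> vec_space.col_space n U" unfolding vec_space.col_space_def[of n] colsU xs
      using inspan[OF j] .
    then show "\<exists>w. w \<in> carrier_vec (rank A) \<and> col A j = U *\<^sub>v w"
      using col_space_eq[OF U] U by auto
  qed
  then obtain w where w: "\<And>j. j < m \<Longrightarrow> w j \<in> carrier_vec (rank A) \<and> col A j = U *\<^sub>v w j"
    by metis
  define C where "C = mat (rank A) m (\<lambda>(i,j). w j $ i)"
  have C: "C \<in> carrier_mat (rank A) m" unfolding C_def by auto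
  have colC: "col C j = w j" if "j < m" for j
    using w[OF that] that unfolding C_def by (auto intro!: eq_vecI)
  have "A = U * C"
  proof (rule mat_col_eqI)
    show "dim_row A = dim_row (U * C)" "dim_col A = dim_col (U * C)" using A U C by auto
    fix j assume "j < dim_col (U * C)"
    then have j: "j < m" using C by auto
    have "col (U * C) j = U *\<^sub>v col C j" using col_mult2[OF U C j] .
    then show "col A j = col (U * C) j" using w[OF j] colC[OF j] by simp
  qed
  then show ?thesis using that U C by blast
qed

lemma rank_mult_le_right:
  assumes M: "M \<in> carrier_mat n m" and N: "N \<in> carrier_mat m k"
  shows "rank (M * N) \<le> vec_space.rank m N"
proof -
  obtain U C where U: "U \<in> carrier_mat m (vec_space.rank m N)" and C: "C \<in> carrier_mat (vec_space.rank m N) k"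
    and NUC: "N = U * C"
    using vec_space.rank_factor[OF N] by blast
  have "M * N = (M * U) * C" using M U C NUC by simp
  then have "rank (M * N) \<le> rank (M * U)" using rank_mult_le_left[of "M * U" "vec_space.rank m N" C k] M U C by simp
  also have "\<dots> \<le> vec_space.rank m N" using rank_le_nc[of "M * U"] M U by simp
  finally show ?thesis .
qed

end


lemma mult_entry:
  assumes "A \<in> carrier_mat n m" "B \<in> carrier_mat m k" "i < n" "j < k"
  shows "(A * B) $$ (i,j) = (\<Sum>l<m. A $$ (i,l) * B $$ (l,j))"
  using assms by (auto simp: scalar_prod_def lessThan_atLeast0 intro!: sum.cong)

lemma mult_vec_entry:
  assumes "A \<in> carrier_mat n m" "v \<in> carrier_vec m" "i < n"
  shows "(A *\<^sub>v v) $ i = (\<Sum>l<m. A $$ (i,l) * v $ l)"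
  using assms by (auto simp: scalar_prod_def lessThan_atLeast0 intro!: sum.cong)

lemma mult_mat_vec_zero_r[simp]:
  fixes A :: "'a :: comm_ring_1 mat"
  assumes "A \<in> carrier_mat n m" shows "A *\<^sub>v 0\<^sub>v m = 0\<^sub>v n"
  using assms by (intro eq_vecI) (auto simp: scalar_prod_def)

lemma sum_delta_r:
  fixes f :: "nat \<Rightarrow> 'a::comm_ring_1"
  assumes "j < m" shows "(\<Sum>l<m. f l * (if l = j then 1 else 0)) = f j"
proof -
  have "(\<Sum>l<m. f l * (if l = j then 1 else 0)) = (\<Sum>l<m. if l = j then f l else 0)"
    by (rule sum.cong) auto
  then show ?thesis using assms by (simp add: sum.delta)
qed

lemma sum_delta_l:
  fixes f :: "nat \<Rightarrow> 'a::comm_ring_1"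
  assumes "j < m" shows "(\<Sum>l<m. (if j = l then 1 else 0) * f l) = f j"
proof -
  have "(\<Sum>l<m. (if j = l then 1 else 0) * f l) = (\<Sum>l<m. if l = j then f l else 0)"
    by (rule sum.cong) auto
  then show ?thesis using assms by (simp add: sum.delta)
qed

lemma sum_if_remove:
  fixes f :: "nat \<Rightarrow> 'a::ab_group_add"
  assumes "k0 < (m::nat)"
  shows "(\<Sum>i<m. if i = k0 then 0 else f i) = (\<Sum>i<m. f i) - f k0"
proof -
  have "(\<Sum>i<m. f i) = (\<Sum>i<m. if i = k0 then f i else 0) + (\<Sum>i<m. if i = k0 then 0 else f i)"
    by (subst sum.distrib[symmetric]) (auto intro!: sum.cong)
  also have "(\<Sum>i<m. if i = k0 then f i else 0) = f k0" using assms by (simp add: sum.delta)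
  finally show ?thesis by (simp add: algebra_simps)
qed

lemma nonzero_vec_index:
  assumes "y \<in> carrier_vec r" "y \<noteq> 0\<^sub>v r"
  obtains k0 where "k0 < r" "y $ k0 \<noteq> 0"
  using assms by (metis carrier_vecD eq_vecI index_zero_vec(1) index_zero_vec(2))

lemma inj_left:
  fixes U C :: "real mat"
  assumes U: "U \<in> carrier_mat n r" and C: "C \<in> carrier_mat r k"
    and rk: "vec_space.rank n (U * C) = r"
    and y: "y \<in> carrier_vec r" and Uy: "U *\<^sub>v y = 0\<^sub>v n"
  shows "y = 0\<^sub>v r"
proof (rule ccontr)
  assume "y \<noteq> 0\<^sub>v r"
  then obtain k0 where k0: "k0 < r" "y $ k0 \<noteq> 0" using nonzero_vec_index[OF y] by blast
  define M where "M = mat n r (\<lambda>(a,j). if j = k0 then 0 else U $$ (a,j))"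
  define N where "N = mat r r (\<lambda>(i,j). if j = k0 then - (y $ i) / (y $ k0) else (if i = j then 1 else 0))"
  have M: "M \<in> carrier_mat n r" and N: "N \<in> carrier_mat r r" unfolding M_def N_def by auto
  have sumU: "(\<Sum>i<r. U $$ (a,i) * y $ i) = 0" if "a < n" for a
    using mult_vec_entry[OF U y that] Uy that by simp
  have "U = M * N"
  proof (rule eq_matI)
    show "dim_row U = dim_row (M * N)" "dim_col U = dim_col (M * N)" using U M N by auto
    fix a j assume a: "a < dim_row (M * N)" and j: "j < dim_col (M * N)"
    then have a: "a < n" and j: "j < r" using M N by auto
    have e: "(M * N) $$ (a,j) = (\<Sum>i<r. M $$ (i\<^sub>0, i) * N $$ (i, j))" if "i\<^sub>0 = a" for i\<^sub>0
      using mult_entry[OF M N a j] that by simp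
    show "U $$ (a,j) = (M * N) $$ (a,j)"
    proof (cases "j = k0")
      case True
      have "(M * N) $$ (a,j) = (\<Sum>i<r. M $$ (a,i) * N $$ (i,j))" by (rule mult_entry[OF M N a j])
      also have "\<dots> = (\<Sum>i<r. if i = k0 then 0 else U $$ (a,i) * (- (y $ i) / (y $ k0)))"
        by (rule sum.cong) (use True a j in \<open>auto simp: M_def N_def\<close>)
      also have "\<dots> = (\<Sum>i<r. U $$ (a,i) * (- (y $ i) / (y $ k0))) - U $$ (a,k0) * (- (y $ k0) / (y $ k0))"
        by (rule sum_if_remove[OF k0(1)])
      also have "(\<Sum>i<r. U $$ (a,i) * (- (y $ i) / (y $ k0))) = - (\<Sum>i<r. U $$ (a,i) * y $ i) / (y $ k0)"
        by (simp add: sum_divide_distrib sum_negf)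
      finally show ?thesis using sumU[OF a] k0 True by simp
    next
      case False
      have "(M * N) $$ (a,j) = (\<Sum>i<r. M $$ (a,i) * N $$ (i,j))" by (rule mult_entry[OF M N a j])
      also have "\<dots> = (\<Sum>i<r. M $$ (a,i) * (if i = j then 1 else 0))"
        by (rule sum.cong) (use False j in \<open>auto simp: N_def\<close>)
      also have "\<dots> = M $$ (a,j)" by (rule sum_delta_r[OF j])
      finally show ?thesis using False a j unfolding M_def by simp
    qed
  qed
  then have "U * C = M * (N * C)" using M N C by simp
  then have "vec_space.rank n (U * C) \<le> vec_space.rank n M"
    using vec_space.rank_mult_le_left[OF M, of "N * C" k] N C by simp
  also have "\<dots> < r"
  proof (rule vec_space.rank_zero_col[OF M k0(1)])
    show "col M k0 = 0\<^sub>v n" unfolding M_def using k0 by (auto intro!: eq_vecI)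
  qed
  finally show False using rk by simp
qed

lemma inj_right:
  fixes U C :: "real mat"
  assumes U: "U \<in> carrier_mat n r" and C: "C \<in> carrier_mat r k"
    and rk: "vec_space.rank n (U * C) = r"
    and y: "y \<in> carrier_vec r" and Cy: "transpose_mat C *\<^sub>v y = 0\<^sub>v k"
  shows "y = 0\<^sub>v r"
proof (rule ccontr)
  assume "y \<noteq> 0\<^sub>v r"
  then obtain k0 where k0: "k0 < r" "y $ k0 \<noteq> 0" using nonzero_vec_index[OF y] by blast
  define C' where "C' = mat r k (\<lambda>(i,b). if i = k0 then 0 else C $$ (i,b))"
  define N where "N = mat r r (\<lambda>(i,j). if i = k0 then - (y $ j) / (y $ k0) else (if i = j then 1 else 0))"
  define Z where "Z = mat r r (\<lambda>(i,j). if i = j \<and> i \<noteq> k0 then 1 else (0::real))"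
  have C': "C' \<in> carrier_mat r k" and N: "N \<in> carrier_mat r r" and Z: "Z \<in> carrier_mat r r"
    unfolding C'_def N_def Z_def by auto
  have CT: "transpose_mat C \<in> carrier_mat k r" using C by auto
  have sumC: "(\<Sum>i<r. C $$ (i,b) * y $ i) = 0" if "b < k" for b
    using mult_vec_entry[OF CT y that] Cy that C by simp
  have "C = N * C'"
  proof (rule eq_matI)
    show "dim_row C = dim_row (N * C')" "dim_col C = dim_col (N * C')" using C C' N by auto
    fix i b assume i: "i < dim_row (N * C')" and b: "b < dim_col (N * C')"
    then have i: "i < r" and b: "b < k" using C' N by auto
    show "C $$ (i,b) = (N * C') $$ (i,b)"
    proof (cases "i = k0")
      case True
      have "(N * C') $$ (i,b) = (\<Sum>j<r. N $$ (i,j) * C' $$ (j,b))" by (rule mult_entry[OF N C' i b])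
      also have "\<dots> = (\<Sum>j<r. if j = k0 then 0 else C $$ (j,b) * (- (y $ j) / (y $ k0)))"
        by (rule sum.cong) (use True i b in \<open>auto simp: C'_def N_def\<close>)
      also have "\<dots> = (\<Sum>j<r. C $$ (j,b) * (- (y $ j) / (y $ k0))) - C $$ (k0,b) * (- (y $ k0) / (y $ k0))"
        by (rule sum_if_remove[OF k0(1)])
      also have "(\<Sum>j<r. C $$ (j,b) * (- (y $ j) / (y $ k0))) = - (\<Sum>j<r. C $$ (j,b) * y $ j) / (y $ k0)"
        by (simp add: sum_divide_distrib sum_negf)
      finally show ?thesis using sumC[OF b] k0 True by simp
    next
      case False
      have "(N * C') $$ (i,b) = (\<Sum>j<r. N $$ (i,j) * C' $$ (j,b))" by (rule mult_entry[OF N C' i b])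
      also have "\<dots> = (\<Sum>j<r. (if i = j then 1 else 0) * C' $$ (j,b))"
        by (rule sum.cong) (use False i in \<open>auto simp: N_def\<close>)
      also have "\<dots> = C' $$ (i,b)" by (rule sum_delta_l[OF i])
      finally show ?thesis using False i b unfolding C'_def by simp
    qed
  qed
  moreover have "Z * C' = C'"
  proof (rule eq_matI)
    show "dim_row (Z * C') = dim_row C'" "dim_col (Z * C') = dim_col C'" using Z C' by auto
    fix i b assume i: "i < dim_row C'" and b: "b < dim_col C'"
    then have i: "i < r" and b: "b < k" using C' by auto
    have "(Z * C') $$ (i,b) = (\<Sum>j<r. Z $$ (i,j) * C' $$ (j,b))" by (rule mult_entry[OF Z C' i b])
    also have "\<dots> = (\<Sum>j<r. (if i = j then 1 else 0) * (if i = k0 then 0 else C' $$ (j,b)))"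
      by (rule sum.cong) (use i b in \<open>auto simp: Z_def\<close>)
    also have "\<dots> = (if i = k0 then 0 else C' $$ (i,b))" by (rule sum_delta_l[OF i])
    also have "\<dots> = C' $$ (i,b)" using i b by (simp add: C'_def)
    finally show "(Z * C') $$ (i,b) = C' $$ (i,b)" .
  qed
  moreover have "(U * N * Z) * C' = U * (N * (Z * C'))"
  proof -
    have "(U * N * Z) * C' = (U * N) * (Z * C')" using U N Z C' by (intro assoc_mult_mat) auto
    also have "\<dots> = U * (N * (Z * C'))" using U N Z C' by (intro assoc_mult_mat) auto
    finally show ?thesis .
  qed
  ultimately have "U * C = (U * N * Z) * C'" by simp
  then have "vec_space.rank n (U * C) \<le> vec_space.rank n (U * N * Z)"
    using vec_space.rank_mult_le_left[of "U * N * Z" n r C' k] U N Z C' by simp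
  also have "\<dots> < r"
  proof (rule vec_space.rank_zero_col[of _ n r k0])
    show "U * N * Z \<in> carrier_mat n r" using U N Z by auto
    show "k0 < r" by fact
    have "col Z k0 = 0\<^sub>v r" unfolding Z_def using k0 by (auto intro!: eq_vecI)
    then show "col (U * N * Z) k0 = 0\<^sub>v n" using col_mult2[of "U * N" n r Z r k0] U N Z k0 by simp
  qed
  finally show False using rk by simp
qed



lemma self_scalar_zero:
  fixes w :: "real vec"
  assumes "w \<in> carrier_vec n" "w \<bullet> w = 0"
  shows "w = 0\<^sub>v n"
proof -
  have "(\<Sum>i\<in>{0..<n}. w $ i * w $ i) = 0" using assms by (simp add: scalar_prod_def)
  then have "\<forall>i\<in>{0..<n}. w $ i * w $ i = 0" by (subst sum_nonneg_eq_0_iff[symmetric]) auto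
  then show ?thesis using assms by (intro eq_vecI) auto
qed

lemma gram_inj_det:
  fixes U :: "real mat"
  assumes U: "U \<in> carrier_mat n r" and inj: "\<And>y. y \<in> carrier_vec r \<Longrightarrow> U *\<^sub>v y = 0\<^sub>v n \<Longrightarrow> y = 0\<^sub>v r"
  shows "det (transpose_mat U * U) \<noteq> 0"
proof
  assume "det (transpose_mat U * U) = 0"
  moreover have G: "transpose_mat U * U \<in> carrier_mat r r" using U by auto
  ultimately obtain v where v: "v \<in> carrier_vec r" "v \<noteq> 0\<^sub>v r" "(transpose_mat U * U) *\<^sub>v v = 0\<^sub>v r"
    using det_0_iff_vec_prod_zero_field[OF G] by blast
  have Uv: "U *\<^sub>v v \<in> carrier_vec n" using U v by auto
  have UT: "transpose_mat U \<in> carrier_mat r n" using U by simp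
  have "transpose_mat U *\<^sub>v (U *\<^sub>v v) = 0\<^sub>v r" using v(3) assoc_mult_mat_vec[OF UT U v(1)] by simp
  then have "(transpose_mat U *\<^sub>v (U *\<^sub>v v)) \<bullet> v = 0" using v by simp
  then have "(U *\<^sub>v v) \<bullet> (U *\<^sub>v v) = 0" using transpose_vec_mult_scalar[OF U v(1) Uv] by simp
  then have "U *\<^sub>v v = 0\<^sub>v n" using self_scalar_zero[OF Uv] by simp
  then show False using inj[OF v(1)] v(2) by simp
qed

lemma sym_inverse:
  fixes G :: "real mat"
  assumes G: "G \<in> carrier_mat r r" and sym: "transpose_mat G = G" and d: "det G \<noteq> 0"
  obtains Gi where "Gi \<in> carrier_mat r r" "Gi * G = 1\<^sub>m r" "G * Gi = 1\<^sub>m r" "transpose_mat Gi = Gi"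
proof -
  have "G \<in> Units (ring_mat TYPE(real) r undefined)" using det_non_zero_imp_unit[OF G d] .
  then obtain Gi where Gi: "Gi \<in> carrier_mat r r" "Gi * G = 1\<^sub>m r" "G * Gi = 1\<^sub>m r"
    unfolding Units_def ring_mat_def by auto
  have "transpose_mat (Gi * G) = 1\<^sub>m r" using Gi(2) transpose_one by metis
  then have 1: "G * transpose_mat Gi = 1\<^sub>m r" using transpose_mult[OF Gi(1) G] sym by simp
  have GiT: "transpose_mat Gi \<in> carrier_mat r r" using Gi(1) by simp
  have "Gi = Gi * (G * transpose_mat Gi)" using 1 right_mult_one_mat[OF Gi(1)] by simp
  also have "\<dots> = (Gi * G) * transpose_mat Gi" using assoc_mult_mat[OF Gi(1) G GiT] by simp
  also have "\<dots> = transpose_mat Gi" using Gi(2) left_mult_one_mat[OF GiT] by simp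
  finally have "transpose_mat Gi = Gi" by simp
  then show ?thesis using that Gi by blast
qed



lemma svd_facts:
  fixes Y Lm Rm :: "real mat"
  assumes Y: "Y \<in> carrier_mat n k" and Lm: "Lm \<in> carrier_mat n n" and Rm: "Rm \<in> carrier_mat k k"
    and svd: "LR_svd Lm Rm Y \<sigma> P Q" and j: "j < vec_space.rank n Y"
  shows "Y *\<^sub>v (Rm *\<^sub>v Q j) = \<sigma> j \<cdot>\<^sub>v P j"
    and "transpose_mat Y *\<^sub>v (Lm *\<^sub>v P j) = \<sigma> j \<cdot>\<^sub>v Q j"
    and "P j \<in> carrier_vec n" "Q j \<in> carrier_vec k" "P j \<bullet> (Lm *\<^sub>v P j) = 1" "0 < \<sigma> j"
proof -
  let ?r = "vec_space.rank n Y"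
  have dY: "dim_row Y = n" "dim_col Y = k" using Y by auto
  note s = svd[unfolded LR_svd_def Let_def dY]
  have PQ: "\<And>i. i < ?r \<Longrightarrow> P i \<in> carrier_vec n \<and> Q i \<in> carrier_vec k" using s by blast
  have oP: "\<And>i j. i < ?r \<Longrightarrow> j < ?r \<Longrightarrow> P i \<bullet> (Lm *\<^sub>v P j) = (if i = j then 1 else 0)" using s by blast
  have oQ: "\<And>i j. i < ?r \<Longrightarrow> j < ?r \<Longrightarrow> Q i \<bullet> (Rm *\<^sub>v Q j) = (if i = j then 1 else 0)" using s by blast
  have ent: "\<And>a b. a < n \<Longrightarrow> b < k \<Longrightarrow> Y $$ (a, b) = (\<Sum>i<?r. \<sigma> i * (P i $ a) * (Q i $ b))" using s by blast
  show "P j \<in> carrier_vec n" "Q j \<in> carrier_vec k" using PQ[OF j] by auto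
  show "P j \<bullet> (Lm *\<^sub>v P j) = 1" using oP[OF j j] by simp
  show "0 < \<sigma> j" using s j by blast
  have w: "Rm *\<^sub>v Q j \<in> carrier_vec k" using Rm PQ[OF j] by auto
  show "Y *\<^sub>v (Rm *\<^sub>v Q j) = \<sigma> j \<cdot>\<^sub>v P j"
  proof (rule eq_vecI)
    show "dim_vec (Y *\<^sub>v (Rm *\<^sub>v Q j)) = dim_vec (\<sigma> j \<cdot>\<^sub>v P j)" using Y PQ[OF j] by auto
    fix a assume "a < dim_vec (\<sigma> j \<cdot>\<^sub>v P j)"
    then have a: "a < n" using PQ[OF j] by auto
    let ?w = "Rm *\<^sub>v Q j"
    have "(Y *\<^sub>v ?w) $ a = (\<Sum>b<k. Y $$ (a,b) * ?w $ b)" by (rule mult_vec_entry[OF Y w a])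
    also have "\<dots> = (\<Sum>b<k. \<Sum>i<?r. \<sigma> i * P i $ a * (Q i $ b * ?w $ b))"
      using ent[OF a] by (auto simp: sum_distrib_right mult.assoc intro!: sum.cong)
    also have "\<dots> = (\<Sum>i<?r. \<sigma> i * P i $ a * (\<Sum>b<k. Q i $ b * ?w $ b))"
      by (subst sum.swap) (simp add: sum_distrib_left)
    also have "\<dots> = (\<Sum>i<?r. \<sigma> i * P i $ a * (Q i \<bullet> ?w))"
      using w Rm by (auto simp: scalar_prod_def lessThan_atLeast0 intro!: sum.cong)
    also have "\<dots> = (\<Sum>i<?r. \<sigma> i * P i $ a * (if i = j then 1 else 0))"
      using oQ j by (auto intro!: sum.cong)
    also have "\<dots> = \<sigma> j * P j $ a" by (rule sum_delta_r[OF j])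
    moreover have "a < dim_vec (P j)" using a PQ[OF j] by auto
    ultimately show "(Y *\<^sub>v ?w) $ a = (\<sigma> j \<cdot>\<^sub>v P j) $ a" by simp
  qed
  have u: "Lm *\<^sub>v P j \<in> carrier_vec n" using Lm PQ[OF j] by auto
  have YT: "transpose_mat Y \<in> carrier_mat k n" using Y by simp
  show "transpose_mat Y *\<^sub>v (Lm *\<^sub>v P j) = \<sigma> j \<cdot>\<^sub>v Q j"
  proof (rule eq_vecI)
    show "dim_vec (transpose_mat Y *\<^sub>v (Lm *\<^sub>v P j)) = dim_vec (\<sigma> j \<cdot>\<^sub>v Q j)" using Y PQ[OF j] by auto
    fix b assume "b < dim_vec (\<sigma> j \<cdot>\<^sub>v Q j)"
    then have b: "b < k" using PQ[OF j] by auto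
    let ?u = "Lm *\<^sub>v P j"
    have "(transpose_mat Y *\<^sub>v ?u) $ b = (\<Sum>a<n. transpose_mat Y $$ (b,a) * ?u $ a)" by (rule mult_vec_entry[OF YT u b])
    also have "\<dots> = (\<Sum>a<n. \<Sum>i<?r. \<sigma> i * Q i $ b * (P i $ a * ?u $ a))"
      using ent b Y by (auto simp: sum_distrib_right mult.assoc mult.left_commute intro!: sum.cong)
    also have "\<dots> = (\<Sum>i<?r. \<sigma> i * Q i $ b * (\<Sum>a<n. P i $ a * ?u $ a))"
      by (subst sum.swap) (simp add: sum_distrib_left)
    also have "\<dots> = (\<Sum>i<?r. \<sigma> i * Q i $ b * (P i \<bullet> ?u))"
      using u Lm by (auto simp: scalar_prod_def lessThan_atLeast0 intro!: sum.cong)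
    also have "\<dots> = (\<Sum>i<?r. \<sigma> i * Q i $ b * (if i = j then 1 else 0))"
      using oP j by (auto intro!: sum.cong)
    also have "\<dots> = \<sigma> j * Q j $ b" by (rule sum_delta_r[OF j])
    moreover have "b < dim_vec (Q j)" using b PQ[OF j] by auto
    ultimately show "(transpose_mat Y *\<^sub>v ?u) $ b = (\<sigma> j \<cdot>\<^sub>v Q j) $ b" by simp
  qed
qed

lemma svd_sigma_sq:
  fixes Y Lm Rm :: "real mat"
  assumes Y: "Y \<in> carrier_mat n k" and Lm: "Lm \<in> carrier_mat n n" and Rm: "Rm \<in> carrier_mat k k"
    and svd: "LR_svd Lm Rm Y \<sigma> P Q" and j: "j < vec_space.rank n Y"
    and c: "Y * Rm * transpose_mat Y * Lm * Y = c \<cdot>\<^sub>m Y"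
  shows "\<sigma> j ^ 2 = c"
proof -
  note f = svd_facts[OF Y Lm Rm svd j]
  have YT: "transpose_mat Y \<in> carrier_mat k n" using Y by simp
  let ?x = "Rm *\<^sub>v Q j"
  have x: "?x \<in> carrier_vec k" using Rm f(4) by auto
  have "(Y * Rm * transpose_mat Y * Lm * Y) *\<^sub>v ?x = Y *\<^sub>v (Rm *\<^sub>v (transpose_mat Y *\<^sub>v (Lm *\<^sub>v (Y *\<^sub>v ?x))))"
  proof -
    have A1: "Y * Rm \<in> carrier_mat n k" using Y Rm by simp
    have A2: "Y * Rm * transpose_mat Y \<in> carrier_mat n n" using A1 YT by simp
    have A3: "Y * Rm * transpose_mat Y * Lm \<in> carrier_mat n n" using A2 Lm by simp
    have v1: "Y *\<^sub>v ?x \<in> carrier_vec n" using Y x by simp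
    have v2: "Lm *\<^sub>v (Y *\<^sub>v ?x) \<in> carrier_vec n" using Lm v1 by simp
    have v3: "transpose_mat Y *\<^sub>v (Lm *\<^sub>v (Y *\<^sub>v ?x)) \<in> carrier_vec k" using YT v2 by simp
    show ?thesis
      using assoc_mult_mat_vec[OF A3 Y x] assoc_mult_mat_vec[OF A2 Lm v1]
        assoc_mult_mat_vec[OF A1 YT v2] assoc_mult_mat_vec[OF Y Rm v3] by simp
  qed
  also have "\<dots> = Y *\<^sub>v (Rm *\<^sub>v (transpose_mat Y *\<^sub>v (Lm *\<^sub>v (\<sigma> j \<cdot>\<^sub>v P j))))" using f(1) by simp
  also have "\<dots> = Y *\<^sub>v (Rm *\<^sub>v (transpose_mat Y *\<^sub>v (\<sigma> j \<cdot>\<^sub>v (Lm *\<^sub>v P j))))"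
    using mult_mat_vec[OF Lm f(3)] by simp
  also have "\<dots> = Y *\<^sub>v (Rm *\<^sub>v (\<sigma> j \<cdot>\<^sub>v (transpose_mat Y *\<^sub>v (Lm *\<^sub>v P j))))"
    using mult_mat_vec[OF YT, of "Lm *\<^sub>v P j"] Lm f(3) by simp
  also have "\<dots> = Y *\<^sub>v (Rm *\<^sub>v (\<sigma> j \<cdot>\<^sub>v (\<sigma> j \<cdot>\<^sub>v Q j)))" using f(2) by simp
  also have "\<dots> = (\<sigma> j * \<sigma> j) \<cdot>\<^sub>v (Y *\<^sub>v ?x)"
    using mult_mat_vec[OF Rm, of "\<sigma> j \<cdot>\<^sub>v Q j"] mult_mat_vec[OF Rm f(4)] mult_mat_vec[OF Y x] f(4) Rm
    by (simp add: smult_smult_assoc)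
  also have "\<dots> = (\<sigma> j * \<sigma> j * \<sigma> j) \<cdot>\<^sub>v P j" using f(1) by (simp add: smult_smult_assoc)
  finally have e1: "(Y * Rm * transpose_mat Y * Lm * Y) *\<^sub>v ?x = (\<sigma> j * \<sigma> j * \<sigma> j) \<cdot>\<^sub>v P j" .
  have e2: "(c \<cdot>\<^sub>m Y) *\<^sub>v ?x = (c * \<sigma> j) \<cdot>\<^sub>v P j"
  proof -
    have "(c \<cdot>\<^sub>m Y) *\<^sub>v ?x = c \<cdot>\<^sub>v (Y *\<^sub>v ?x)"
    proof (rule eq_vecI)
      fix i assume "i < dim_vec (c \<cdot>\<^sub>v (Y *\<^sub>v ?x))"
      then have i: "i < n" using Y by simp
      have cY: "c \<cdot>\<^sub>m Y \<in> carrier_mat n k" using Y by simp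
      show "((c \<cdot>\<^sub>m Y) *\<^sub>v ?x) $ i = (c \<cdot>\<^sub>v (Y *\<^sub>v ?x)) $ i"
        using mult_vec_entry[OF cY x i] mult_vec_entry[OF Y x i] i Y
        by (simp add: sum_distrib_left mult.assoc)
    qed (use Y in simp)
    then show ?thesis using f(1) by (simp add: smult_smult_assoc)
  qed
  have "P j \<noteq> 0\<^sub>v n" using f(5) Lm by auto
  then obtain a where a: "a < n" "P j $ a \<noteq> 0" using nonzero_vec_index[OF f(3)] by blast
  have "(\<sigma> j * \<sigma> j * \<sigma> j) * P j $ a = (c * \<sigma> j) * P j $ a"
    using arg_cong[OF trans[OF e1[symmetric] trans[OF arg_cong[OF c, of "\<lambda>M. M *\<^sub>v ?x"] e2]], of "\<lambda>v. v $ a"] a f(3)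
    by simp
  then have "\<sigma> j * \<sigma> j * \<sigma> j = c * \<sigma> j" using a by simp
  then show ?thesis using f(6) by (simp add: power2_eq_square)
qed



lemma assoc_dim:
  fixes A B C :: "'a :: comm_semiring_0 mat"
  shows "dim_col A = dim_row B \<Longrightarrow> dim_col B = dim_row C \<Longrightarrow> A * B * C = A * (B * C)"
  by (rule assoc_mult_mat[of A "dim_row A" "dim_col A" B "dim_col B" C "dim_col C"]) auto

lemma transpose_mult_dim:
  fixes A B :: "'a :: comm_semiring_0 mat"
  shows "dim_col A = dim_row B \<Longrightarrow> transpose_mat (A * B) = transpose_mat B * transpose_mat A"
  by (rule transpose_mult[of A "dim_row A" "dim_col A" B "dim_col B"]) auto

lemma smult_mult_dim:
  fixes A B :: "'a :: comm_ring_1 mat"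
  shows "dim_col A = dim_row B \<Longrightarrow> A * (c \<cdot>\<^sub>m B) = c \<cdot>\<^sub>m (A * B)"
  by (rule mult_smult_distrib[of A "dim_row A" "dim_col A" B "dim_col B"]) auto

definition dg :: "nat \<Rightarrow> (nat \<Rightarrow> real) \<Rightarrow> real mat" where
  "dg n d = mat n n (\<lambda>(i,j). if i = j then d i else 0)"

lemma dg_dims[simp]: "dim_row (dg n d) = n" "dim_col (dg n d) = n"
  by (auto simp: dg_def)

lemma dg_carrier[simp]: "dg n d \<in> carrier_mat n n" by (auto simp: dg_def)

lemma dg_transpose[simp]: "transpose_mat (dg n d) = dg n d"
  by (auto simp: dg_def intro!: eq_matI)

lemma dg_mult:
  assumes "dim_row Z = n"
  shows "dg n d * Z = mat n (dim_col Z) (\<lambda>(i,j). d i * Z $$ (i,j))"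
proof (rule eq_matI)
  fix i j assume i: "i < dim_row (mat n (dim_col Z) (\<lambda>(i,j). d i * Z $$ (i,j)))"
    and j: "j < dim_col (mat n (dim_col Z) (\<lambda>(i,j). d i * Z $$ (i,j)))"
  then have i: "i < n" and j: "j < dim_col Z" by auto
  have Z: "Z \<in> carrier_mat n (dim_col Z)" using assms by auto
  have "(dg n d * Z) $$ (i,j) = (\<Sum>l<n. dg n d $$ (i,l) * Z $$ (l,j))"
    by (rule mult_entry[OF dg_carrier Z i j])
  also have "\<dots> = (\<Sum>l<n. (if i = l then 1 else 0) * (d i * Z $$ (l,j)))"
    by (rule sum.cong) (auto simp: dg_def i)
  also have "\<dots> = d i * Z $$ (i,j)" by (rule sum_delta_l[OF i])
  finally show "(dg n d * Z) $$ (i,j) = mat n (dim_col Z) (\<lambda>(i,j). d i * Z $$ (i,j)) $$ (i,j)"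
    using i j by simp
qed (use assms in auto)

lemma dg_dg:
  assumes "dim_row Z = n"
  shows "dg n d * (dg n e * Z) = dg n (\<lambda>i. d i * e i) * Z"
  using assms by (auto simp: dg_mult intro!: eq_matI)

lemma dg_dg': "dg n d * dg n e = dg n (\<lambda>i. d i * e i)"
  using dg_mult[of "dg n e" n d] by (auto simp: dg_def intro!: eq_matI)

lemma dg_scal:
  assumes "dim_row Z = n" "\<And>i. i < n \<Longrightarrow> d i = c * e i"
  shows "dg n d * Z = c \<cdot>\<^sub>m (dg n e * Z)"
  using assms by (auto simp: dg_mult intro!: eq_matI)

lemma dg_zero:
  assumes "dim_row Z = n" "\<And>i. i < n \<Longrightarrow> d i = 0"
  shows "dg n d * Z = 0\<^sub>m n (dim_col Z)"
  using assms by (auto simp: dg_mult intro!: eq_matI)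

lemma dg_one:
  assumes "dim_row Z = n" "\<And>i. i < n \<Longrightarrow> d i = 1"
  shows "dg n d * Z = Z"
  using assms by (auto simp: dg_mult intro!: eq_matI)

lemma dg_cong:
  assumes "dim_row Z = n" "\<And>i. i < n \<Longrightarrow> d i = e i"
  shows "dg n d * Z = dg n e * Z"
  using assms by (auto simp: dg_mult intro!: eq_matI)

lemma psd_gram:
  fixes A :: "real mat"
  assumes A: "A \<in> carrier_mat n m" and v: "v \<in> carrier_vec n"
  shows "0 \<le> v \<bullet> ((A * transpose_mat A) *\<^sub>v v)"
proof -
  have AT: "transpose_mat A \<in> carrier_mat m n" using A by simp
  have w: "transpose_mat A *\<^sub>v v \<in> carrier_vec m" using AT v by simp
  have "(A * transpose_mat A) *\<^sub>v v = A *\<^sub>v (transpose_mat A *\<^sub>v v)"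
    by (rule assoc_mult_mat_vec[OF A AT v])
  then have "v \<bullet> ((A * transpose_mat A) *\<^sub>v v) = (transpose_mat A *\<^sub>v v) \<bullet> (transpose_mat A *\<^sub>v v)"
    using transpose_vec_mult_scalar[OF A w v] comm_scalar_prod[OF v, of "A *\<^sub>v (transpose_mat A *\<^sub>v v)"] A w
    by simp
  also have "\<dots> \<ge> 0" unfolding scalar_prod_def by (intro sum_nonneg) simp
  finally show ?thesis .
qed

lemma bil_entry:
  fixes A M B :: "real mat"
  assumes A: "A \<in> carrier_mat n m" and M: "M \<in> carrier_mat n n" and B: "B \<in> carrier_mat n k"
    and i: "i < m" and j: "j < k"
  shows "(transpose_mat A * M * B) $$ (i,j) = col A i \<bullet> (M *\<^sub>v col B j)"
proof -
  have AT: "transpose_mat A \<in> carrier_mat m n" using A by simp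
  have "transpose_mat A * M * B = transpose_mat A * (M * B)" using AT M B by simp
  also have "\<dots> $$ (i,j) = row (transpose_mat A) i \<bullet> col (M * B) j" using AT M B i j by simp
  also have "\<dots> = col A i \<bullet> (M *\<^sub>v col B j)" using A i by (simp only: col_mult2[OF M B j]) simp
  finally show ?thesis .
qed



lemma dg_rank:
  assumes "\<And>i. i < n \<Longrightarrow> d i \<noteq> 0"
  shows "vec_space.rank n (dg n d) = n"
proof -
  have ut: "upper_triangular (dg n d)" by (auto simp: upper_triangular_def dg_def)
  have "det (dg n d) = (\<Prod>i = 0..<n. d i)"
    using det_upper_triangular[OF ut dg_carrier] by (simp add: prod_list_diag_prod dg_def)
  also have "\<dots> \<noteq> 0" using assms by (simp add: prod_zero_iff)
  finally show ?thesis using vec_space.det_rank_iff[OF dg_carrier] by blast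
qed

lemma construction:
  fixes U C Gi Hi :: "real mat" and r1 r2 n k :: nat
  assumes U: "U \<in> carrier_mat n (r1 + r2)" and C: "C \<in> carrier_mat (r1 + r2) k"
    and Gi: "Gi \<in> carrier_mat (r1 + r2) (r1 + r2)" and Hi: "Hi \<in> carrier_mat (r1 + r2) (r1 + r2)"
    and GiT: "transpose_mat Gi = Gi" and HiT: "transpose_mat Hi = Hi"
    and G1: "Gi * (transpose_mat U * U) = 1\<^sub>m (r1 + r2)" and G2: "(transpose_mat U * U) * Gi = 1\<^sub>m (r1 + r2)"
    and H1: "Hi * (C * transpose_mat C) = 1\<^sub>m (r1 + r2)" and H2: "(C * transpose_mat C) * Hi = 1\<^sub>m (r1 + r2)"
  defines "r \<equiv> r1 + r2"
  defines "P1 \<equiv> dg r (\<lambda>i. if i < r1 then 1 else 0)"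
  defines "P2 \<equiv> dg r (\<lambda>i. if i < r1 then 0 else 1)"
  defines "S \<equiv> dg r (\<lambda>i. if i < r1 then 1 else 2)"
  defines "Si \<equiv> dg r (\<lambda>i. if i < r1 then 1 else 1/2)"
  defines "Lm \<equiv> U * (Gi * (Gi * transpose_mat U))"
  defines "Rm \<equiv> transpose_mat C * (Hi * (S * (S * (Hi * C))))"
  shows "transpose_mat U * Lm * U = 1\<^sub>m r"
    and "C * Rm * transpose_mat C = S * S"
    and "\<And>N. dim_row N = r \<Longrightarrow> Lm * (U * (transpose_mat U * (U * N))) = U * N"
    and "\<And>N. dim_row N = r \<Longrightarrow> transpose_mat C * N = Rm * (transpose_mat C * (Si * (Si * (C * (transpose_mat C * N)))))"
    and "transpose_mat (U * (P1 * C)) * Lm * (U * (P2 * C)) = 0\<^sub>m k k"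
    and "(U * (P1 * C)) * Rm * transpose_mat (U * (P2 * C)) = 0\<^sub>m n n"
    and "(U * (P1 * C)) * Rm * transpose_mat (U * (P1 * C)) * Lm * (U * (P1 * C)) = U * (P1 * C)"
    and "(U * (P2 * C)) * Rm * transpose_mat (U * (P2 * C)) * Lm * (U * (P2 * C)) = 4 \<cdot>\<^sub>m (U * (P2 * C))"
    and "transpose_mat Lm = Lm" "transpose_mat Rm = Rm"
    and "Lm = (U * Gi) * transpose_mat (U * Gi)"
    and "Rm = (transpose_mat C * (Hi * S)) * transpose_mat (transpose_mat C * (Hi * S))"
proof -
  have dU[simp]: "dim_row U = n" "dim_col U = r" using U r_def by auto
  have dC[simp]: "dim_row C = r" "dim_col C = k" using C r_def by auto
  have dG[simp]: "dim_row Gi = r" "dim_col Gi = r" using Gi r_def by auto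
  have dH[simp]: "dim_row Hi = r" "dim_col Hi = r" using Hi r_def by auto
  have dP[simp]: "dim_row P1 = r" "dim_col P1 = r" "dim_row P2 = r" "dim_col P2 = r"
    "dim_row S = r" "dim_col S = r" "dim_row Si = r" "dim_col Si = r"
    unfolding P1_def P2_def S_def Si_def by auto
  have tP[simp]: "transpose_mat P1 = P1" "transpose_mat P2 = P2" "transpose_mat S = S" "transpose_mat Si = Si"
    unfolding P1_def P2_def S_def Si_def by auto
  have g1[simp]: "Gi * (transpose_mat U * U) = 1\<^sub>m r" using G1 r_def by simp
  have g1'[simp]: "Gi * (transpose_mat U * (U * Z)) = Z" if "dim_row Z = r" for Z
  proof -
    have "Gi * (transpose_mat U * (U * Z)) = (Gi * (transpose_mat U * U)) * Z" using that by (simp add: assoc_dim del: g1)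
    also have "\<dots> = Z" using that by (simp only: g1 left_mult_one_mat')
    finally show ?thesis .
  qed
  have g2[simp]: "transpose_mat U * (U * Gi) = 1\<^sub>m r" using G2 r_def by (simp add: assoc_dim)
  have g2'[simp]: "transpose_mat U * (U * (Gi * Z)) = Z" if "dim_row Z = r" for Z
  proof -
    have "transpose_mat U * (U * (Gi * Z)) = (transpose_mat U * (U * Gi)) * Z" using that by (simp add: assoc_dim del: g2)
    also have "\<dots> = Z" using that by (simp only: g2 left_mult_one_mat')
    finally show ?thesis .
  qed
  have h1[simp]: "Hi * (C * transpose_mat C) = 1\<^sub>m r" using H1 r_def by simp
  have h1'[simp]: "Hi * (C * (transpose_mat C * Z)) = Z" if "dim_row Z = r" for Z
  proof -
    have "Hi * (C * (transpose_mat C * Z)) = (Hi * (C * transpose_mat C)) * Z" using that by (simp add: assoc_dim del: h1)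
    also have "\<dots> = Z" using that by (simp only: h1 left_mult_one_mat')
    finally show ?thesis .
  qed
  have h2[simp]: "C * (transpose_mat C * Hi) = 1\<^sub>m r" using H2 r_def by (simp add: assoc_dim)
  have h2'[simp]: "C * (transpose_mat C * (Hi * Z)) = Z" if "dim_row Z = r" for Z
  proof -
    have "C * (transpose_mat C * (Hi * Z)) = (C * (transpose_mat C * Hi)) * Z" using that by (simp add: assoc_dim del: h2)
    also have "\<dots> = Z" using that by (simp only: h2 left_mult_one_mat')
    finally show ?thesis .
  qed
  have d1[simp]: "P1 * (P2 * Z) = 0\<^sub>m r (dim_col Z)" if "dim_row Z = r" for Z
    unfolding P1_def P2_def using that by (auto simp: dg_mult intro!: eq_matI)
  have d2[simp]: "P1 * (S * (S * (P2 * Z))) = 0\<^sub>m r (dim_col Z)" if "dim_row Z = r" for Z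
    unfolding P1_def P2_def S_def using that by (auto simp: dg_mult intro!: eq_matI)
  have d3[simp]: "P1 * (S * (S * (P1 * (P1 * Z)))) = P1 * Z" if "dim_row Z = r" for Z
    unfolding P1_def S_def using that by (auto simp: dg_mult intro!: eq_matI)
  have d4[simp]: "P2 * (S * (S * (P2 * (P2 * Z)))) = 4 \<cdot>\<^sub>m (P2 * Z)" if "dim_row Z = r" for Z
    unfolding P2_def S_def using that by (auto simp: dg_mult intro!: eq_matI)
  have d5[simp]: "S * (S * (Si * (Si * Z))) = Z" if "dim_row Z = r" for Z
    unfolding S_def Si_def using that by (auto simp: dg_mult intro!: eq_matI)
  note rules = assoc_dim transpose_mult_dim GiT HiT smult_mult_dim
  show "transpose_mat U * Lm * U = 1\<^sub>m r" unfolding Lm_def by (simp add: rules)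
  show "C * Rm * transpose_mat C = S * S" unfolding Rm_def by (simp add: rules)
  show "\<And>N. dim_row N = r \<Longrightarrow> Lm * (U * (transpose_mat U * (U * N))) = U * N" unfolding Lm_def by (simp add: rules)
  show "\<And>N. dim_row N = r \<Longrightarrow> transpose_mat C * N = Rm * (transpose_mat C * (Si * (Si * (C * (transpose_mat C * N)))))"
    unfolding Rm_def by (simp add: rules)
  show "transpose_mat (U * (P1 * C)) * Lm * (U * (P2 * C)) = 0\<^sub>m k k" unfolding Lm_def by (simp add: rules)
  show "(U * (P1 * C)) * Rm * transpose_mat (U * (P2 * C)) = 0\<^sub>m n n" unfolding Rm_def by (simp add: rules)
  show "(U * (P1 * C)) * Rm * transpose_mat (U * (P1 * C)) * Lm * (U * (P1 * C)) = U * (P1 * C)"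
    unfolding Rm_def Lm_def by (simp add: rules)
  show "(U * (P2 * C)) * Rm * transpose_mat (U * (P2 * C)) * Lm * (U * (P2 * C)) = 4 \<cdot>\<^sub>m (U * (P2 * C))"
    unfolding Rm_def Lm_def by (simp add: rules)
  show "transpose_mat Lm = Lm" unfolding Lm_def by (simp add: rules)
  show "transpose_mat Rm = Rm" unfolding Rm_def by (simp add: rules)
  show "Lm = (U * Gi) * transpose_mat (U * Gi)" unfolding Lm_def by (simp add: rules)
  show "Rm = (transpose_mat C * (Hi * S)) * transpose_mat (transpose_mat C * (Hi * S))" unfolding Rm_def by (simp add: rules)
qed



lemma sum_split_add:
  fixes f :: "nat \<Rightarrow> 'a::comm_monoid_add"
  shows "(\<Sum>l<r1 + r2. f l) = (\<Sum>l<r1. f l) + (\<Sum>l<r2. f (r1 + l))"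
  by (induct r2) (simp_all add: add.assoc)

lemma traj_carrier: "traj L ys \<in> carrier_mat L (length ys - L + 1)"
  by (simp add: traj_def)

lemma traj_add:
  assumes "length X1 = N" "length X2 = N" "L \<le> N"
  shows "traj L (map2 (+) X1 X2) = traj L X1 + traj L X2"
  using assms by (auto simp: traj_def intro!: eq_matI)

lemma colsp_mult:
  fixes A B :: "real mat"
  assumes A: "A \<in> carrier_mat n m" and B: "B \<in> carrier_mat m k"
  shows "col_space (A * B) \<subseteq> col_space A"
proof
  fix x assume "x \<in> col_space (A * B)"
  then obtain v where v: "v \<in> carrier_vec (dim_col (A * B))" "x = (A * B) *\<^sub>v v" unfolding col_space_def by auto
  then have v': "v \<in> carrier_vec k" using B by simp
  have "x = A *\<^sub>v (B *\<^sub>v v)" using v v' A B by simp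
  moreover have "B *\<^sub>v v \<in> carrier_vec (dim_col A)" using B v' A by simp
  ultimately show "x \<in> col_space A" unfolding col_space_def by blast
qed



theorem theorem1:
  fixes X1 X2 :: "real list" and N L r r1 r2 :: nat
  assumes "length X1 = N" and "length X2 = N"
    and "1 < L" and "L < N"
    and "L_rank L (map2 (+) X1 X2) = r"
    and "L_rank L X1 = r1" and "L_rank L X2 = r2"
    and "r1 + r2 = r"
  shows "\<exists>Lm Rm. sym_psd L Lm \<and> sym_psd (N - L + 1) Rm \<and>
           vec_space.rank L Lm = r \<and> vec_space.rank (N - L + 1) Rm = r \<and>
           consistent Lm Rm (traj L (map2 (+) X1 X2)) \<and>
           consistent Lm Rm (traj L X1) \<and> consistent Lm Rm (traj L X2) \<and>
           strongly_sep Lm Rm (traj L X1) (traj L X2)"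
proof -
  define K where "K = N - L + 1"
  define X1m where "X1m = traj L X1"
  define X2m where "X2m = traj L X2"
  define Xm where "Xm = traj L (map2 (+) X1 X2)"
  have lm: "length (map2 (+) X1 X2) = N" using assms(1,2) by simp
  have cX1: "X1m \<in> carrier_mat L K" unfolding X1m_def K_def using traj_carrier[of L X1] assms(1) by simp
  have cX2: "X2m \<in> carrier_mat L K" unfolding X2m_def K_def using traj_carrier[of L X2] assms(2) by simp
  have cX: "Xm \<in> carrier_mat L K" unfolding Xm_def K_def using traj_carrier[of L "map2 (+) X1 X2"] lm by simp
  have XmE: "Xm = X1m + X2m" unfolding Xm_def X1m_def X2m_def using traj_add assms(1,2,4) by simp
  have rk1: "vec_space.rank L X1m = r1" using assms(6) unfolding L_rank_def X1m_def .
  have rk2: "vec_space.rank L X2m = r2" using assms(7) unfolding L_rank_def X2m_def .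
  have rk: "vec_space.rank L Xm = r1 + r2" using assms(5,8) unfolding L_rank_def Xm_def by simp
  obtain U1 C1 where U1: "U1 \<in> carrier_mat L r1" and C1: "C1 \<in> carrier_mat r1 K" and X1f: "X1m = U1 * C1"
    using vec_space.rank_factor[OF cX1] rk1 by metis
  obtain U2 C2 where U2: "U2 \<in> carrier_mat L r2" and C2: "C2 \<in> carrier_mat r2 K" and X2f: "X2m = U2 * C2"
    using vec_space.rank_factor[OF cX2] rk2 by metis
  define U where "U = mat L (r1 + r2) (\<lambda>(a,i). if i < r1 then U1 $$ (a,i) else U2 $$ (a, i - r1))"
  define C where "C = mat (r1 + r2) K (\<lambda>(i,b). if i < r1 then C1 $$ (i,b) else C2 $$ (i - r1, b))"
  define P1 where "P1 = dg (r1 + r2) (\<lambda>i. if i < r1 then 1 else 0)"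
  define P2 where "P2 = dg (r1 + r2) (\<lambda>i. if i < r1 then 0 else 1)"
  define S where "S = dg (r1 + r2) (\<lambda>i. if i < r1 then 1 else 2)"
  have U: "U \<in> carrier_mat L (r1 + r2)" unfolding U_def by simp
  have C: "C \<in> carrier_mat (r1 + r2) K" unfolding C_def by simp
  have X1e0: "X1m $$ (a,b) = (\<Sum>l<r1. U $$ (a,l) * C $$ (l,b))" if "a < L" "b < K" for a b
    unfolding X1f using mult_entry[OF U1 C1 that] that by (auto simp: U_def C_def intro!: sum.cong)
  have X2e0: "X2m $$ (a,b) = (\<Sum>l<r2. U $$ (a,r1 + l) * C $$ (r1 + l,b))" if "a < L" "b < K" for a b
    unfolding X2f using mult_entry[OF U2 C2 that] that by (auto simp: U_def C_def intro!: sum.cong)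
  have X1e: "X1m = U * (P1 * C)"
  proof (rule eq_matI)
    fix a b assume "a < dim_row (U * (P1 * C))" "b < dim_col (U * (P1 * C))"
    then have a: "a < L" and b: "b < K" using U C by (auto simp: P1_def)
    have PC: "P1 * C \<in> carrier_mat (r1 + r2) K" unfolding P1_def using mult_carrier_mat[OF dg_carrier C] .
    have "(U * (P1 * C)) $$ (a,b) = (\<Sum>l<r1 + r2. U $$ (a,l) * (P1 * C) $$ (l,b))"
      by (rule mult_entry[OF U PC a b])
    also have "\<dots> = (\<Sum>l<r1 + r2. U $$ (a,l) * ((if l < r1 then 1 else 0) * C $$ (l,b)))"
      by (rule sum.cong) (use C b in \<open>auto simp: P1_def dg_mult\<close>)
    also have "\<dots> = (\<Sum>l<r1. U $$ (a,l) * C $$ (l,b))" by (simp add: sum_split_add)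
    finally show "X1m $$ (a,b) = (U * (P1 * C)) $$ (a,b)" using X1e0[OF a b] by simp
  qed (use cX1 U C in \<open>auto simp: P1_def\<close>)
  have X2e: "X2m = U * (P2 * C)"
  proof (rule eq_matI)
    fix a b assume "a < dim_row (U * (P2 * C))" "b < dim_col (U * (P2 * C))"
    then have a: "a < L" and b: "b < K" using U C by (auto simp: P2_def)
    have PC: "P2 * C \<in> carrier_mat (r1 + r2) K" unfolding P2_def using mult_carrier_mat[OF dg_carrier C] .
    have "(U * (P2 * C)) $$ (a,b) = (\<Sum>l<r1 + r2. U $$ (a,l) * (P2 * C) $$ (l,b))"
      by (rule mult_entry[OF U PC a b])
    also have "\<dots> = (\<Sum>l<r1 + r2. U $$ (a,l) * ((if l < r1 then 0 else 1) * C $$ (l,b)))"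
      by (rule sum.cong) (use C b in \<open>auto simp: P2_def dg_mult\<close>)
    also have "\<dots> = (\<Sum>l<r2. U $$ (a,r1 + l) * C $$ (r1 + l,b))" by (simp add: sum_split_add)
    finally show "X2m $$ (a,b) = (U * (P2 * C)) $$ (a,b)" using X2e0[OF a b] by simp
  qed (use cX2 U C in \<open>auto simp: P2_def\<close>)
  have Xe: "Xm = U * C"
  proof (rule eq_matI)
    fix a b assume "a < dim_row (U * C)" "b < dim_col (U * C)"
    then have a: "a < L" and b: "b < K" using U C by auto
    have "(U * C) $$ (a,b) = (\<Sum>l<r1 + r2. U $$ (a,l) * C $$ (l,b))" by (rule mult_entry[OF U C a b])
    also have "\<dots> = X1m $$ (a,b) + X2m $$ (a,b)" using X1e0[OF a b] X2e0[OF a b] by (simp add: sum_split_add)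
    finally show "Xm $$ (a,b) = (U * C) $$ (a,b)" using XmE a b cX1 cX2 by simp
  qed (use cX U C in auto)
  have rkUC: "vec_space.rank L (U * C) = r1 + r2" using rk Xe by simp
  have injU: "\<And>y. y \<in> carrier_vec (r1 + r2) \<Longrightarrow> U *\<^sub>v y = 0\<^sub>v L \<Longrightarrow> y = 0\<^sub>v (r1 + r2)"
    using inj_left[OF U C rkUC] by blast
  have CT: "transpose_mat C \<in> carrier_mat K (r1 + r2)" using C by simp
  have injC: "\<And>y. y \<in> carrier_vec (r1 + r2) \<Longrightarrow> transpose_mat C *\<^sub>v y = 0\<^sub>v K \<Longrightarrow> y = 0\<^sub>v (r1 + r2)"
    using inj_right[OF U C rkUC] by blast
  have dG: "det (transpose_mat U * U) \<noteq> 0" by (rule gram_inj_det[OF U injU])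
  have dH: "det (C * transpose_mat C) \<noteq> 0" using gram_inj_det[OF CT injC] by simp
  have symG: "transpose_mat (transpose_mat U * U) = transpose_mat U * U"
    using transpose_mult[of "transpose_mat U" "r1 + r2" L U "r1 + r2"] U by simp
  have symH: "transpose_mat (C * transpose_mat C) = C * transpose_mat C"
    using transpose_mult[OF C CT] by simp
  obtain Gi where Gi: "Gi \<in> carrier_mat (r1 + r2) (r1 + r2)" "Gi * (transpose_mat U * U) = 1\<^sub>m (r1 + r2)"
    "(transpose_mat U * U) * Gi = 1\<^sub>m (r1 + r2)" "transpose_mat Gi = Gi"
    using sym_inverse[OF _ symG dG, of "r1 + r2"] U by (metis mult_carrier_mat transpose_carrier_mat)
  obtain Hi where Hi: "Hi \<in> carrier_mat (r1 + r2) (r1 + r2)" "Hi * (C * transpose_mat C) = 1\<^sub>m (r1 + r2)"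
    "(C * transpose_mat C) * Hi = 1\<^sub>m (r1 + r2)" "transpose_mat Hi = Hi"
    using sym_inverse[OF _ symH dH, of "r1 + r2"] C CT by (metis mult_carrier_mat)
  define Lm where "Lm = U * (Gi * (Gi * transpose_mat U))"
  define Rm where "Rm = transpose_mat C * (Hi * (S * (S * (Hi * C))))"
  note CF = construction[OF U C Gi(1) Hi(1) Gi(4) Hi(4) Gi(2) Gi(3) Hi(2) Hi(3),
      folded P1_def P2_def S_def, folded Lm_def Rm_def]

  define s where "s = (\<lambda>i::nat. if i < r1 then (1::real) else 2)"
  have S_s: "S = dg (r1 + r2) s" unfolding S_def s_def ..
  have SS: "S * S = dg (r1 + r2) (\<lambda>i. s i * s i)" unfolding S_s by (rule dg_dg')
  have UT: "transpose_mat U \<in> carrier_mat (r1 + r2) L" using U by simp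
  have Lc: "Lm \<in> carrier_mat L L" unfolding Lm_def
    by (rule mult_carrier_mat[OF U mult_carrier_mat[OF Gi(1) mult_carrier_mat[OF Gi(1) UT]]])
  have Sc: "S \<in> carrier_mat (r1 + r2) (r1 + r2)" unfolding S_def by simp
  have Rc: "Rm \<in> carrier_mat K K" unfolding Rm_def
    by (rule mult_carrier_mat[OF CT mult_carrier_mat[OF Hi(1) mult_carrier_mat[OF Sc mult_carrier_mat[OF Sc mult_carrier_mat[OF Hi(1) C]]]]])
  have dP1: "P1 \<in> carrier_mat (r1 + r2) (r1 + r2)" "P2 \<in> carrier_mat (r1 + r2) (r1 + r2)"
    unfolding P1_def P2_def by auto
  have tP: "transpose_mat P1 = P1" "transpose_mat P2 = P2" unfolding P1_def P2_def by auto
  have psdL: "sym_psd L Lm"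
    unfolding sym_psd_def
  proof (intro conjI ballI)
    show "Lm \<in> carrier_mat L L" by fact
    show "transpose_mat Lm = Lm" by (rule CF(9))
    fix v :: "real vec" assume v: "v \<in> carrier_vec L"
    have UG: "U * Gi \<in> carrier_mat L (r1 + r2)" using U Gi(1) by simp
    show "0 \<le> v \<bullet> (Lm *\<^sub>v v)" by (subst CF(11)) (rule psd_gram[OF UG v])
  qed
  have psdR: "sym_psd K Rm"
    unfolding sym_psd_def
  proof (intro conjI ballI)
    show "Rm \<in> carrier_mat K K" by fact
    show "transpose_mat Rm = Rm" by (rule CF(10))
    fix v :: "real vec" assume v: "v \<in> carrier_vec K"
    have CHS: "transpose_mat C * (Hi * S) \<in> carrier_mat K (r1 + r2)" using CT Hi(1) by (simp add: S_def)
    show "0 \<le> v \<bullet> (Rm *\<^sub>v v)" by (subst CF(12)) (rule psd_gram[OF CHS v])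
  qed
  have rankL: "vec_space.rank L Lm = r1 + r2"
  proof (rule antisym)
    have "vec_space.rank L Lm \<le> vec_space.rank L U"
      unfolding Lm_def by (rule vec_space.rank_mult_le_left[OF U, of _ L]) (use Gi(1) UT in simp)
    also have "\<dots> \<le> r1 + r2" by (rule vec_space.rank_le_nc[OF U])
    finally show "vec_space.rank L Lm \<le> r1 + r2" .
    have "U * C = Lm * (U * (transpose_mat U * (U * C)))" using CF(3)[of C] C by simp
    then have "vec_space.rank L (U * C) \<le> vec_space.rank L Lm"
      using vec_space.rank_mult_le_left[OF Lc, of "U * (transpose_mat U * (U * C))" K] U UT C by simp
    then show "r1 + r2 \<le> vec_space.rank L Lm" using rkUC by simp
  qed
  have rankR: "vec_space.rank K Rm = r1 + r2"
  proof (rule antisym)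
    have "vec_space.rank K Rm \<le> vec_space.rank K (transpose_mat C)"
      unfolding Rm_def by (rule vec_space.rank_mult_le_left[OF CT, of _ K])
        (rule mult_carrier_mat[OF Hi(1) mult_carrier_mat[OF Sc mult_carrier_mat[OF Sc mult_carrier_mat[OF Hi(1) C]]]])
    also have "\<dots> \<le> r1 + r2" by (rule vec_space.rank_le_nc[OF CT])
    finally show "vec_space.rank K Rm \<le> r1 + r2" .
    have "r1 + r2 = vec_space.rank (r1 + r2) (S * S)" unfolding SS by (rule dg_rank[symmetric]) (simp add: s_def)
    also have "\<dots> = vec_space.rank (r1 + r2) (C * Rm * transpose_mat C)" using CF(2) by simp
    also have "\<dots> \<le> vec_space.rank (r1 + r2) (C * Rm)"
      by (rule vec_space.rank_mult_le_left[of _ "r1 + r2" K _ "r1 + r2"]) (use C Rc CT in simp_all)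
    also have "\<dots> \<le> vec_space.rank K Rm" by (rule vec_space.rank_mult_le_right[OF C Rc])
    finally show "r1 + r2 \<le> vec_space.rank K Rm" .
  qed
  have colL: "col_space (U * N) \<subseteq> col_space Lm" if N: "N \<in> carrier_mat (r1 + r2) K" for N
  proof -
    have "dim_row N = r1 + r2" using N by simp
    then have "U * N = Lm * (U * (transpose_mat U * (U * N)))" by (rule CF(3)[symmetric])
    moreover have "U * (transpose_mat U * (U * N)) \<in> carrier_mat L K"
      by (rule mult_carrier_mat[OF U mult_carrier_mat[OF UT mult_carrier_mat[OF U N]]])
    ultimately show ?thesis using colsp_mult[OF Lc] by metis
  qed
  have colR: "col_space (transpose_mat C * M) \<subseteq> col_space Rm" if M: "M \<in> carrier_mat (r1 + r2) L" for M
  proof -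
    define Si where "Si = dg (r1 + r2) (\<lambda>i. if i < r1 then 1 else 1 / 2)"
    have "dim_row M = r1 + r2" using M by simp
    then have "transpose_mat C * M = Rm * (transpose_mat C * (Si * (Si * (C * (transpose_mat C * M)))))"
      unfolding Si_def by (rule CF(4))
    moreover have Sic: "Si \<in> carrier_mat (r1 + r2) (r1 + r2)" unfolding Si_def by simp
    have "transpose_mat C * (Si * (Si * (C * (transpose_mat C * M)))) \<in> carrier_mat K L"
      by (rule mult_carrier_mat[OF CT mult_carrier_mat[OF Sic mult_carrier_mat[OF Sic mult_carrier_mat[OF C mult_carrier_mat[OF CT M]]]]])
    ultimately show ?thesis using colsp_mult[OF Rc] by metis
  qed
  have tX: "transpose_mat (U * C) = transpose_mat C * transpose_mat U" using transpose_mult[OF U C] .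
  have P1C: "P1 * C \<in> carrier_mat (r1 + r2) K" "P2 * C \<in> carrier_mat (r1 + r2) K"
    using mult_carrier_mat[OF dP1(1) C] mult_carrier_mat[OF dP1(2) C] by auto
  have tX1: "transpose_mat (U * (P1 * C)) = transpose_mat C * (P1 * transpose_mat U)"
  proof -
    have "transpose_mat (U * (P1 * C)) = transpose_mat (P1 * C) * transpose_mat U" by (rule transpose_mult[OF U P1C(1)])
    also have "transpose_mat (P1 * C) = transpose_mat C * P1" using transpose_mult[OF dP1(1) C] tP by simp
    also have "transpose_mat C * P1 * transpose_mat U = transpose_mat C * (P1 * transpose_mat U)"
      by (rule assoc_mult_mat[OF CT dP1(1) UT])
    finally show ?thesis .
  qed
  have tX2: "transpose_mat (U * (P2 * C)) = transpose_mat C * (P2 * transpose_mat U)"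
  proof -
    have "transpose_mat (U * (P2 * C)) = transpose_mat (P2 * C) * transpose_mat U" by (rule transpose_mult[OF U P1C(2)])
    also have "transpose_mat (P2 * C) = transpose_mat C * P2" using transpose_mult[OF dP1(2) C] tP by simp
    also have "transpose_mat C * P2 * transpose_mat U = transpose_mat C * (P2 * transpose_mat U)"
      by (rule assoc_mult_mat[OF CT dP1(2) UT])
    finally show ?thesis .
  qed
  have P1U: "P1 * transpose_mat U \<in> carrier_mat (r1 + r2) L" "P2 * transpose_mat U \<in> carrier_mat (r1 + r2) L"
    using mult_carrier_mat[OF dP1(1) UT] mult_carrier_mat[OF dP1(2) UT] by auto
  have consX: "consistent Lm Rm Xm" unfolding consistent_def row_space_def Xe tX
    using colL[OF C] colR[OF UT] by simp
  have consX1: "consistent Lm Rm X1m" unfolding consistent_def row_space_def X1e tX1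
    using colL[OF P1C(1)] colR[OF P1U(1)] by simp
  have consX2: "consistent Lm Rm X2m" unfolding consistent_def row_space_def X2e tX2
    using colL[OF P1C(2)] colR[OF P1U(2)] by simp
  have dX: "dim_row X1m = L" "dim_col X1m = K" "dim_row X2m = L" "dim_col X2m = K" using cX1 cX2 by auto
  have weak: "weakly_sep Lm Rm X1m X2m" unfolding weakly_sep_def dX
    using CF(5) CF(6) X1e X2e by simp
  have SSe: "(S * S) $$ (i,j) = (if i = j then s i * s i else 0)" if "i < r1 + r2" "j < r1 + r2" for i j
    unfolding SS using that by (simp add: dg_def)
  have svd1: "LR_svd Lm Rm X1m (\<lambda>_. 1) (\<lambda>i. col U i) (\<lambda>i. col (transpose_mat C) i)"
    unfolding LR_svd_def Let_def dX rk1
  proof (intro conjI allI impI)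
    fix i assume i: "i < r1"
    show "col U i \<in> carrier_vec L" "col (transpose_mat C) i \<in> carrier_vec K" using U CT i by auto
  next
    fix i j assume i: "i < r1" and j: "j < r1"
    have "col U i \<bullet> (Lm *\<^sub>v col U j) = (transpose_mat U * Lm * U) $$ (i,j)"
      using bil_entry[OF U Lc U, of i j] i j by simp
    also have "\<dots> = (if i = j then 1 else 0)" using CF(1) i j by simp
    finally show "col U i \<bullet> (Lm *\<^sub>v col U j) = (if i = j then 1 else 0)" .
  next
    fix i j assume i: "i < r1" and j: "j < r1"
    have "col (transpose_mat C) i \<bullet> (Rm *\<^sub>v col (transpose_mat C) j) = (transpose_mat (transpose_mat C) * Rm * transpose_mat C) $$ (i,j)"
      using bil_entry[OF CT Rc CT, of i j] i j by simp
    also have "\<dots> = (S * S) $$ (i,j)" using CF(2) by simp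
    also have "\<dots> = (if i = j then 1 else 0)" using SSe[of i j] i j by (simp add: s_def)
    finally show "col (transpose_mat C) i \<bullet> (Rm *\<^sub>v col (transpose_mat C) j) = (if i = j then 1 else 0)" .
  next
    fix a b assume a: "a < L" and b: "b < K"
    show "X1m $$ (a,b) = (\<Sum>i<r1. 1 * col U i $ a * col (transpose_mat C) i $ b)"
      using X1e0[OF a b] a b U C by (auto intro!: sum.cong)
  qed auto
  have svd2: "LR_svd Lm Rm X2m (\<lambda>_. 2) (\<lambda>i. col U (r1 + i)) (\<lambda>i. (1/2) \<cdot>\<^sub>v col (transpose_mat C) (r1 + i))"
    unfolding LR_svd_def Let_def dX rk2
  proof (intro conjI allI impI)
    fix i assume i: "i < r2"
    show "col U (r1 + i) \<in> carrier_vec L" "(1/2) \<cdot>\<^sub>v col (transpose_mat C) (r1 + i) \<in> carrier_vec K"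
      using U CT i by auto
  next
    fix i j assume i: "i < r2" and j: "j < r2"
    have "col U (r1 + i) \<bullet> (Lm *\<^sub>v col U (r1 + j)) = (transpose_mat U * Lm * U) $$ (r1 + i, r1 + j)"
      using bil_entry[OF U Lc U, of "r1 + i" "r1 + j"] i j by simp
    also have "\<dots> = (if i = j then 1 else 0)" using CF(1) i j by simp
    finally show "col U (r1 + i) \<bullet> (Lm *\<^sub>v col U (r1 + j)) = (if i = j then 1 else 0)" .
  next
    fix i j assume i: "i < r2" and j: "j < r2"
    let ?x = "col (transpose_mat C) (r1 + i)" and ?y = "col (transpose_mat C) (r1 + j)"
    have x: "?x \<in> carrier_vec K" and y: "?y \<in> carrier_vec K" using CT i j by auto
    have Ry: "Rm *\<^sub>v ?y \<in> carrier_vec K" using Rc y by simp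
    have "((1/2) \<cdot>\<^sub>v ?x) \<bullet> (Rm *\<^sub>v ((1/2) \<cdot>\<^sub>v ?y)) = (1/2) * ((1/2) * (?x \<bullet> (Rm *\<^sub>v ?y)))"
      using mult_mat_vec[OF Rc y] x y Ry by simp
    also have "?x \<bullet> (Rm *\<^sub>v ?y) = (transpose_mat (transpose_mat C) * Rm * transpose_mat C) $$ (r1 + i, r1 + j)"
      using bil_entry[OF CT Rc CT, of "r1 + i" "r1 + j"] i j by simp
    also have "\<dots> = (S * S) $$ (r1 + i, r1 + j)" using CF(2) by simp
    also have "\<dots> = (if i = j then 4 else 0)" using SSe[of "r1 + i" "r1 + j"] i j by (simp add: s_def)
    finally show "((1/2) \<cdot>\<^sub>v ?x) \<bullet> (Rm *\<^sub>v ((1/2) \<cdot>\<^sub>v ?y)) = (if i = j then 1 else 0)"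
      by (cases "i = j") simp_all
  next
    fix a b assume a: "a < L" and b: "b < K"
    show "X2m $$ (a,b) = (\<Sum>i<r2. 2 * col U (r1 + i) $ a * ((1/2) \<cdot>\<^sub>v col (transpose_mat C) (r1 + i)) $ b)"
      using X2e0[OF a b] a b U C by (auto intro!: sum.cong)
  qed auto
  have c1: "X1m * Rm * transpose_mat X1m * Lm * X1m = 1 \<cdot>\<^sub>m X1m"
  proof -
    have "1 \<cdot>\<^sub>m X1m = X1m" by (auto intro!: eq_matI)
    then show ?thesis using CF(7) X1e by simp
  qed
  have c2: "X2m * Rm * transpose_mat X2m * Lm * X2m = 4 \<cdot>\<^sub>m X2m" using CF(8) X2e by simp
  have uniq: "\<sigma>1 i \<noteq> \<sigma>2 j"
    if s1: "LR_svd Lm Rm X1m \<sigma>1 P1' Q1'" and s2: "LR_svd Lm Rm X2m \<sigma>2 P2' Q2'"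
      and i: "i < vec_space.rank (dim_row X1m) X1m" and j: "j < vec_space.rank (dim_row X2m) X2m"
    for \<sigma>1 P1' Q1' \<sigma>2 P2' Q2' i j
  proof -
    have i': "i < vec_space.rank L X1m" and j': "j < vec_space.rank L X2m" using i j dX by auto
    have e1: "\<sigma>1 i ^ 2 = 1" by (rule svd_sigma_sq[OF cX1 Lc Rc s1 i' c1])
    have e2: "\<sigma>2 j ^ 2 = 4" by (rule svd_sigma_sq[OF cX2 Lc Rc s2 j' c2])
    have p1: "0 < \<sigma>1 i" using svd_facts(6)[OF cX1 Lc Rc s1 i'] .
    have p2: "0 < \<sigma>2 j" using svd_facts(6)[OF cX2 Lc Rc s2 j'] .
    have "\<sigma>1 i = sqrt 1" using e1 p1 by (metis less_eq_real_def real_sqrt_unique)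
    moreover have "\<sigma>2 j = sqrt 4" using e2 p2 by (metis less_eq_real_def real_sqrt_unique)
    ultimately show ?thesis by simp
  qed
  have strong: "strongly_sep Lm Rm X1m X2m"
    unfolding strongly_sep_def using weak svd1 svd2 uniq by blast
  show ?thesis
    unfolding K_def[symmetric] X1m_def[symmetric] X2m_def[symmetric] Xm_def[symmetric] assms(8)[symmetric]
    using psdL psdR rankL rankR consX consX1 consX2 strong by blast
qed


end
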